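(* Let $P$ be a finite poset and $t\geq 2$, $n\geq 1$ integers. Suppose $\mathcal{F}\subseteq[t]^n$ is induced $P$-saturated and $i\in[n]$ is such that (a) $i$ is not separating for $\mathcal{F}$, and (b) $f(i)\in\{1,t\}$ for all $f\in\mathcal{F}$. Then $L_i(\mathcal{F})=\{L_i(f):f\in\mathcal{F}\}$ is an induced $P$-saturated family in $[t]^{n+1}$.
   Context: $[n]=\{1,\dots,n\}$; $[t]^n$ is the set of functions $f:[n]\to[t]$ ordered by $f\leq g$ iff $f(j)\leq g(j)$ for all $j$. An induced copy of $P$ in $\mathcal{F}\subseteq[t]^n$ is an injective map $\phi:P\to\mathcal{F}$ with $\phi(x)\leq\phi(y)$ iff $x\leq_P y$. $\mathcal{F}$ is induced $P$-saturated if it contains no induced copy of $P$ and for every $f\in[t]^n\setminus\mathcal{F}$, $\mathcal{F}\cup\{f\}$ contains an induced copy of $P$. For $f\in[t]^n$ and $i\in[n]$: $L_i(f)\in[t]^{n+1}$ is given by $L_i(f)(x)=f(x)$ for $x\in[n]$ and $L_i(f)(n+1)=f(i)$; $D_i(f)\in[t]^{n-1}$ is given by $D_i(f)(x)=f(x)$ for $x<i$ and $D_i(f)(x)=f(x+1)$ for $i\leq x\leq n-1$. Coordinate $i$ is separating for $\mathcal{F}$ if there exist distinct $f,f'\in\mathcal{F}$ with $D_i(f)\leq D_i(f')$ and $f(i)>f'(i)$. *)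

theory Defs
  imports Main
begin

text \<open>Elements of [t]^n are represented as functions nat \<Rightarrow> nat with values in {1..t}
  on {1..n} and value 0 outside {1..n} (canonical representative).\<close>

definition cube :: "nat \<Rightarrow> nat \<Rightarrow> (nat \<Rightarrow> nat) set" where
  "cube t n = {f. (\<forall>j\<in>{1..n}. f j \<in> {1..t}) \<and> (\<forall>j. j \<notin> {1..n} \<longrightarrow> f j = 0)}"

definition leq :: "nat \<Rightarrow> (nat \<Rightarrow> nat) \<Rightarrow> (nat \<Rightarrow> nat) \<Rightarrow> bool" where
  "leq n f g \<longleftrightarrow> (\<forall>j\<in>{1..n}. f j \<le> g j)"

definition induced_copy ::
  "nat \<Rightarrow> 'a set \<Rightarrow> ('a \<times> 'a) set \<Rightarrow> (nat \<Rightarrow> nat) set \<Rightarrow> ('a \<Rightarrow> (nat \<Rightarrow> nat)) \<Rightarrow> bool" where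
  "induced_copy n P r F \<phi> \<longleftrightarrow>
     (\<forall>x\<in>P. \<phi> x \<in> F) \<and> inj_on \<phi> P \<and>
     (\<forall>x\<in>P. \<forall>y\<in>P. leq n (\<phi> x) (\<phi> y) \<longleftrightarrow> (x, y) \<in> r)"

definition has_induced_copy ::
  "nat \<Rightarrow> 'a set \<Rightarrow> ('a \<times> 'a) set \<Rightarrow> (nat \<Rightarrow> nat) set \<Rightarrow> bool" where
  "has_induced_copy n P r F \<longleftrightarrow> (\<exists>\<phi>. induced_copy n P r F \<phi>)"

definition induced_saturated ::
  "nat \<Rightarrow> nat \<Rightarrow> 'a set \<Rightarrow> ('a \<times> 'a) set \<Rightarrow> (nat \<Rightarrow> nat) set \<Rightarrow> bool" where
  "induced_saturated t n P r F \<longleftrightarrow>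
     F \<subseteq> cube t n \<and> \<not> has_induced_copy n P r F \<and>
     (\<forall>f \<in> cube t n - F. has_induced_copy n P r (insert f F))"

definition Lop :: "nat \<Rightarrow> nat \<Rightarrow> (nat \<Rightarrow> nat) \<Rightarrow> (nat \<Rightarrow> nat)" where
  "Lop n i f = (\<lambda>x. if x \<in> {1..n} then f x else if x = n + 1 then f i else 0)"

definition Dop :: "nat \<Rightarrow> nat \<Rightarrow> (nat \<Rightarrow> nat) \<Rightarrow> (nat \<Rightarrow> nat)" where
  "Dop n i f = (\<lambda>x. if x \<in> {1..n-1} then (if x < i then f x else f (x + 1)) else 0)"

definition separating :: "nat \<Rightarrow> nat \<Rightarrow> (nat \<Rightarrow> nat) set \<Rightarrow> bool" where
  "separating n i F \<longleftrightarrow>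
     (\<exists>f\<in>F. \<exists>f'\<in>F. f \<noteq> f' \<and> leq (n - 1) (Dop n i f) (Dop n i f') \<and> f i > f' i)"

end

theory Submission
  imports Defs
begin

lemma L_leq:
  assumes "i \<in> {1..n}"
  shows "leq (Suc n) (Lop n i f) (Lop n i g) \<longleftrightarrow> leq n f g"
  using assms unfolding leq_def Lop_def
  by (auto simp: le_Suc_eq)

lemma L_inj:
  assumes "f \<in> cube t n" "g \<in> cube t n" "Lop n i f = Lop n i g"
  shows "f = g"
proof
  fix x
  show "f x = g x"
  proof (cases "x \<in> {1..n}")
    case True
    then show ?thesis using fun_cong[OF assms(3), of x] by (simp add: Lop_def)
  next
    case False
    then show ?thesis using assms(1,2) by (simp add: cube_def)
  qed
qed

lemma L_cube:
  assumes "f \<in> cube t n" "i \<in> {1..n}"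
  shows "Lop n i f \<in> cube t (Suc n)"
  using assms unfolding cube_def Lop_def by (auto simp: le_Suc_eq)

lemma D_leq:
  assumes "i \<in> {1..n}" "\<forall>j\<in>{1..n}. j \<noteq> i \<longrightarrow> f j \<le> g j"
  shows "leq (n - 1) (Dop n i f) (Dop n i g)"
  using assms unfolding leq_def Dop_def by auto

lemma transfer:
  assumes "induced_copy n P r A \<phi>" "\<forall>u\<in>A. m u \<in> B" "inj_on m A"
    "\<forall>u\<in>A. \<forall>v\<in>A. leq n' (m u) (m v) = leq n u v"
  shows "induced_copy n' P r B (m \<circ> \<phi>)"
proof -
  have im: "\<phi> ` P \<subseteq> A" using assms(1) unfolding induced_copy_def by auto
  have "inj_on (m \<circ> \<phi>) P"
    using assms(1) unfolding induced_copy_def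
    by (meson comp_inj_on im assms(3) inj_on_subset)
  then show ?thesis using assms im unfolding induced_copy_def by auto
qed

theorem mainTheorem11:
  fixes P :: "'a set" and r :: "('a \<times> 'a) set"
    and t n i :: nat and F :: "(nat \<Rightarrow> nat) set"
  assumes "finite P" and "partial_order_on P r"
    and "t \<ge> 2" and "n \<ge> 1"
    and "induced_saturated t n P r F"
    and "i \<in> {1..n}"
    and "\<not> separating n i F"
    and "\<forall>f\<in>F. f i \<in> {1, t}"
  shows "induced_saturated t (n + 1) P r (Lop n i ` F)"
proof -
  note sat = assms(5)[unfolded induced_saturated_def]
  have Fc: "F \<subseteq> cube t n" using sat by blast
  have noF: "\<not> has_induced_copy n P r F" using sat by blast
  have satF: "\<And>f. f \<in> cube t n \<Longrightarrow> f \<notin> F \<Longrightarrow> has_induced_copy n P r (insert f F)"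
    using sat by blast
  have i: "i \<in> {1..n}" by fact
  let ?G = "Lop n i ` F"
  have injL: "inj_on (Lop n i) F" using L_inj Fc by (meson inj_onI subsetD)
  have A: "?G \<subseteq> cube t (n+1)" using L_cube Fc i by auto
  have B: "\<not> has_induced_copy (n+1) P r ?G"
  proof
    assume "has_induced_copy (n+1) P r ?G"
    then obtain \<phi> where ph: "induced_copy (n+1) P r ?G \<phi>" unfolding has_induced_copy_def by blast
    let ?m = "the_inv_into F (Lop n i)"
    have m1: "\<forall>u\<in>?G. ?m u \<in> F" using injL the_inv_into_into by fastforce
    have m2: "\<forall>u\<in>?G. Lop n i (?m u) = u" using injL f_the_inv_into_f by fastforce
    have m3: "inj_on ?m ?G" by (metis inj_onI m2)
    have m4: "\<forall>u\<in>?G. \<forall>v\<in>?G. leq n (?m u) (?m v) = leq (n+1) u v"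
      using m2 L_leq[OF i] by (metis Suc_eq_plus1)
    have "induced_copy n P r F (?m \<circ> \<phi>)" by (rule transfer[OF ph m1 m3 m4])
    then show False using noF unfolding has_induced_copy_def by blast
  qed
  have C: "\<forall>h \<in> cube t (n+1) - ?G. has_induced_copy (n+1) P r (insert h ?G)"
  proof
    fix h assume h: "h \<in> cube t (n+1) - ?G"
    have hc: "h \<in> cube t (Suc n)" using h by simp
    have hG: "h \<notin> ?G" using h by simp
    define c where "c = min (h i) (h (Suc n))"
    define d where "d = max (h i) (h (Suc n))"
    define g where "g = (\<lambda>j. if j \<in> {1..n} then h j else 0)"
    define gc where "gc = g(i := c)"
    define gd where "gd = g(i := d)"
    have hv: "\<And>j. j \<in> {1..Suc n} \<Longrightarrow> h j \<in> {1..t}" and h0: "\<And>j. j \<notin> {1..Suc n} \<Longrightarrow> h j = 0"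
      using hc unfolding cube_def by auto
    have hi: "h i \<in> {1..t}" using hv i by auto
    have hn: "h (Suc n) \<in> {1..t}" using hv by auto
    have cd: "c \<le> d" "1 \<le> c" "d \<le> t" using hi hn unfolding c_def d_def by auto
    have gcc: "gc \<in> cube t n" using hv i cd unfolding cube_def gc_def g_def by auto
    have gdc: "gd \<in> cube t n" using hv i cd unfolding cube_def gd_def g_def by auto
    have eqd: "\<And>f. leq (Suc n) h (Lop n i f) \<longleftrightarrow> leq n gd f"
      using i unfolding leq_def Lop_def gd_def g_def d_def by (auto simp: le_Suc_eq)
    have eqc: "\<And>f. leq (Suc n) (Lop n i f) h \<longleftrightarrow> leq n f gc"
      using i unfolding leq_def Lop_def gc_def g_def c_def by (auto simp: le_Suc_eq)
    have hL: "c = d \<Longrightarrow> h = Lop n i gc"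
    proof
      fix x assume "c = d"
      then have "h i = h (Suc n)" unfolding c_def d_def by auto
      then show "h x = Lop n i gc x"
        using h0[of x] unfolding Lop_def gc_def g_def c_def by auto
    qed
    have hL2: "c = d \<Longrightarrow> gd = gc" unfolding gc_def gd_def by simp
    have "\<exists>k. k \<in> cube t n \<and> k \<notin> F \<and> (\<forall>f\<in>F. leq n f k = leq n f gc) \<and> (\<forall>f\<in>F. leq n k f = leq n gd f)"
    proof (cases "\<exists>f\<in>F. leq n gc f \<and> \<not> leq n gd f")
      case False
      have "gc \<notin> F"
      proof
        assume gF: "gc \<in> F"
        show False
        proof (cases "c = d")
          case True then show ?thesis using hL gF hG by blast
        next
          case False
          then have "\<not> leq n gd gc" using i cd unfolding leq_def gc_def gd_def by auto
          moreover have "leq n gc gc" unfolding leq_def by auto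
          ultimately show False using \<open>\<not> (\<exists>f\<in>F. leq n gc f \<and> \<not> leq n gd f)\<close> gF by blast
        qed
      qed
      moreover have "\<forall>f. leq n gd f \<longrightarrow> leq n gc f"
        using cd unfolding leq_def gc_def gd_def by (metis fun_upd_other fun_upd_same order_trans)
      ultimately show ?thesis using gcc False by (intro exI[of _ gc]) blast
    next
      case True
      then obtain f where f: "f \<in> F" "leq n gc f" "\<not> leq n gd f" by blast
      have nob: "\<not> (\<exists>f'\<in>F. leq n f' gd \<and> \<not> leq n f' gc)"
      proof
        assume "\<exists>f'\<in>F. leq n f' gd \<and> \<not> leq n f' gc"
        then obtain f' where f': "f' \<in> F" "leq n f' gd" "\<not> leq n f' gc" by blast
        have oth: "\<forall>j\<in>{1..n}. j \<noteq> i \<longrightarrow> f' j \<le> f j"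
          using f(2) f'(2) unfolding leq_def gc_def gd_def
          by (metis fun_upd_other order_trans)
        have "c \<le> f i" using f(2) i unfolding leq_def gc_def by (metis fun_upd_same)
        then have "f i < d" using f(2,3) i unfolding leq_def gc_def gd_def
          by (metis fun_upd_other fun_upd_same not_le)
        then have fi: "f i = 1" using assms(8) f(1) cd by auto
        have "f' i \<le> d" using f'(2) i unfolding leq_def gd_def by (metis fun_upd_same)
        then have "c < f' i" using f'(2,3) i unfolding leq_def gc_def gd_def
          by (metis fun_upd_other fun_upd_same not_le)
        then have fi': "f' i = t" using assms(8) f'(1) cd by auto
        have "f' \<noteq> f" using fi fi' assms(3) by auto
        moreover have "leq (n - 1) (Dop n i f') (Dop n i f)" using D_leq[OF i oth] .
        ultimately have "separating n i F" unfolding separating_def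
          using f(1) f'(1) fi fi' assms(3) by force
        then show False using assms(7) by blast
      qed
      have "gd \<notin> F"
      proof
        assume gF: "gd \<in> F"
        show False
        proof (cases "c = d")
          case True then show ?thesis using hL hL2 gF hG by auto
        next
          case False
          then have "\<not> leq n gd gc" using i cd unfolding leq_def gc_def gd_def by auto
          moreover have "leq n gd gd" unfolding leq_def by auto
          ultimately show False using nob gF by blast
        qed
      qed
      moreover have "\<forall>f. leq n f gc \<longrightarrow> leq n f gd"
        using cd unfolding leq_def gc_def gd_def by (metis fun_upd_other fun_upd_same order_trans)
      ultimately show ?thesis using gdc nob by (intro exI[of _ gd]) blast
    qed
    then obtain k where k: "k \<in> cube t n" "k \<notin> F" "\<forall>f\<in>F. leq n f k = leq n f gc"
      "\<forall>f\<in>F. leq n k f = leq n gd f" by blast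
    obtain \<phi> where ph: "induced_copy n P r (insert k F) \<phi>"
      using satF[OF k(1,2)] unfolding has_induced_copy_def by blast
    define m where "m = (\<lambda>u. if u = k then h else Lop n i u)"
    have m1: "\<forall>u\<in>insert k F. m u \<in> insert h ?G" unfolding m_def by auto
    have m2: "inj_on m (insert k F)"
    proof (rule inj_onI)
      fix u v assume uv: "u \<in> insert k F" "v \<in> insert k F" "m u = m v"
      show "u = v"
      proof (cases "u = k"; cases "v = k")
        assume "u \<noteq> k" "v \<noteq> k"
        then show ?thesis using uv injL unfolding m_def inj_on_def by auto
      qed (use uv hG in \<open>auto simp: m_def\<close>)
    qed
    have refl: "\<And>N f. leq N f f" unfolding leq_def by auto
    have m3: "\<forall>u\<in>insert k F. \<forall>v\<in>insert k F. leq (n+1) (m u) (m v) = leq n u v"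
    proof (intro ballI)
      fix u v assume uv: "u \<in> insert k F" "v \<in> insert k F"
      show "leq (n+1) (m u) (m v) = leq n u v"
      proof (cases "u = k"; cases "v = k")
        assume "u \<noteq> k" "v \<noteq> k"
        then show ?thesis using L_leq[OF i] unfolding m_def by simp
      next
        assume "u = k" "v \<noteq> k"
        then show ?thesis using eqd k(4) uv unfolding m_def by simp
      next
        assume "u \<noteq> k" "v = k"
        then show ?thesis using eqc k(3) uv unfolding m_def by simp
      next
        assume "u = k" "v = k"
        then show ?thesis using refl unfolding m_def by simp
      qed
    qed
    show "has_induced_copy (n+1) P r (insert h ?G)"
      unfolding has_induced_copy_def using transfer[OF ph m1 m2 m3] by blast
  qed
  show ?thesis unfolding induced_saturated_def using A B C by blast
qed

end
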